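(* For every multiset of formulae $\Gamma$ and formula $C$: if the sequent $\Gamma\vdash C$ is derivable in ${\rm Linc}^-$ extended with the rule $subst$, then it is derivable in ${\rm Linc}^-$ without $subst$; moreover, if it has a cut-free (i.e. $mc$-free) derivation using $subst$, then it has a cut-free derivation without $subst$.
   Context: ${\rm Linc}^-$ is an intuitionistic sequent calculus over simply typed $\lambda$-terms (formulae are terms of type $o$, built from parameters $X^p\,\vec t$, equalities $s=t$, predicate atoms $p\,\vec t$, $\bot,\top,\land,\lor,\supset,\forall,\exists$), with a fixed definition of inductive and co-inductive predicate clauses. Its rules are: $init$ ($C\vdash C$); left contraction and weakening; multicut $mc$ (from $\Delta_i\vdash B_i$, $i=1..n$, $n>0$, and $B_1,\dots,B_n,\Gamma\vdash C$ infer $\Delta_1,\dots,\Delta_n,\Gamma\vdash C$); standard intuitionistic left/right rules for the connectives and quantifiers; ${\rm eq}\mathcal{R}$: $\Gamma\vdash t=t$; ${\rm eq}\mathcal{L}$: from the set of premises $\{\Gamma\rho\vdash C\rho\mid s\rho=_{\beta\eta}t\rho\}$ (one for each substitution $\rho$ unifying $s,t$) infer $s=t,\Gamma\vdash C$; and left/right rules for inductive and co-inductive predicates and parameters (${\rm I}\mathcal{L},{\rm I}\mathcal{R},{\rm I}\mathcal{R}_p,{\rm CI}\mathcal{L},{\rm CI}\mathcal{L}_p,{\rm CI}\mathcal{R}$). The rule $subst$ is: from the premises $\{\Gamma\theta\vdash C\theta\}_\theta$, one for every substitution $\theta$ of terms for eigenvariables, infer $\Gamma\vdash C$. A derivation is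 cut-free if it contains no instance of $mc$. *)

theory Defs
  imports Main "HOL-Library.Multiset"
begin

datatype ty = TBase string | TO | TArr ty ty

fun arg_tys :: "ty \<Rightarrow> ty list" where
  "arg_tys (TArr a b) = a # arg_tys b"
| "arg_tys _ = []"

definition pred_ty :: "ty \<Rightarrow> bool" where
  "pred_ty T \<longleftrightarrow> T = foldr TArr (arg_tys T) TO"

section \<open>Simply typed lambda terms (de Bruijn indices for bound variables)\<close>

datatype const =
    CBot | CTop | CAnd | COr | CImp
  | CAll ty | CEx ty | CEq ty
  | CPred string
  | CSym string

datatype trm =
    TBnd nat
  | TFree nat ty            \<comment> \<open>eigenvariable (name, type)\<close>
  | TPar nat string         \<comment> \<open>parameter X^p (name X, annotation p)\<close>
  | TCon const
  | TApp trm trm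
  | TLam ty trm

datatype fixkind = Mu | Nu

text \<open>A definition: the signature (predicate and constant types), the set of
  defined predicates, and for each predicate p its clause
  p x1..xn =mu/nu= B p x1..xn, where body p = B is a closed term of type
  (type of p) -> (type of p).\<close>
record defn =
  preds :: "string set"
  psig  :: "string \<Rightarrow> ty"
  csig  :: "string \<Rightarrow> ty"
  kind  :: "string \<Rightarrow> fixkind"
  body  :: "string \<Rightarrow> trm"

fun ctype :: "defn \<Rightarrow> const \<Rightarrow> ty" where
  "ctype D CBot = TO"
| "ctype D CTop = TO"
| "ctype D CAnd = TArr TO (TArr TO TO)"
| "ctype D COr = TArr TO (TArr TO TO)"
| "ctype D CImp = TArr TO (TArr TO TO)"
| "ctype D (CAll T) = TArr (TArr T TO) TO"
| "ctype D (CEx T) = TArr (TArr T TO) TO"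
| "ctype D (CEq T) = TArr T (TArr T TO)"
| "ctype D (CPred p) = psig D p"
| "ctype D (CSym c) = csig D c"

fun con_ok :: "defn \<Rightarrow> const \<Rightarrow> bool" where
  "con_ok D (CPred p) = (p \<in> preds D)"
| "con_ok D _ = True"

inductive has_ty :: "defn \<Rightarrow> ty list \<Rightarrow> trm \<Rightarrow> ty \<Rightarrow> bool" for D where
  ty_bnd: "i < length E \<Longrightarrow> has_ty D E (TBnd i) (E ! i)"
| ty_free: "has_ty D E (TFree n T) T"
| ty_par: "p \<in> preds D \<Longrightarrow> has_ty D E (TPar X p) (psig D p)"
| ty_con: "con_ok D c \<Longrightarrow> has_ty D E (TCon c) (ctype D c)"
| ty_app: "has_ty D E s (TArr A B) \<Longrightarrow> has_ty D E t A \<Longrightarrow> has_ty D E (TApp s t) B"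
| ty_lam: "has_ty D (A # E) t B \<Longrightarrow> has_ty D E (TLam A t) (TArr A B)"

definition formula :: "defn \<Rightarrow> trm \<Rightarrow> bool" where
  "formula D F \<longleftrightarrow> has_ty D [] F TO"

definition wf_seq :: "defn \<Rightarrow> trm multiset \<Rightarrow> trm \<Rightarrow> bool" where
  "wf_seq D \<Gamma> C \<longleftrightarrow> (\<forall>F\<in>#\<Gamma>. formula D F) \<and> formula D C"

fun lift :: "nat \<Rightarrow> trm \<Rightarrow> trm" where
  "lift k (TBnd i) = (if i < k then TBnd i else TBnd (Suc i))"
| "lift k (TApp s t) = TApp (lift k s) (lift k t)"
| "lift k (TLam T t) = TLam T (lift (Suc k) t)"
| "lift k t = t"

fun subst_bd :: "trm \<Rightarrow> nat \<Rightarrow> trm \<Rightarrow> trm" where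
  "subst_bd (TBnd i) k u = (if i < k then TBnd i else if i = k then u else TBnd (i - 1))"
| "subst_bd (TApp s t) k u = TApp (subst_bd s k u) (subst_bd t k u)"
| "subst_bd (TLam T t) k u = TLam T (subst_bd t (Suc k) (lift 0 u))"
| "subst_bd t k u = t"

fun loose :: "trm \<Rightarrow> nat \<Rightarrow> bool" where
  "loose (TBnd i) k = (i = k)"
| "loose (TApp s t) k = (loose s k \<or> loose t k)"
| "loose (TLam T t) k = loose t (Suc k)"
| "loose t k = False"

inductive bestep :: "trm \<Rightarrow> trm \<Rightarrow> bool" where
  beta: "bestep (TApp (TLam T s) t) (subst_bd s 0 t)"
| eta: "\<not> loose s 0 \<Longrightarrow> bestep (TLam T (TApp s (TBnd 0))) (subst_bd s 0 (TBnd 0))"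
| appL: "bestep s s' \<Longrightarrow> bestep (TApp s t) (TApp s' t)"
| appR: "bestep t t' \<Longrightarrow> bestep (TApp s t) (TApp s t')"
| lam: "bestep t t' \<Longrightarrow> bestep (TLam T t) (TLam T t')"

definition beq :: "trm \<Rightarrow> trm \<Rightarrow> bool" where
  "beq = equivclp bestep"

fun frees :: "trm \<Rightarrow> nat set" where
  "frees (TFree n T) = {n}"
| "frees (TApp s t) = frees s \<union> frees t"
| "frees (TLam T t) = frees t"
| "frees _ = {}"

definition frees_seq :: "trm multiset \<Rightarrow> trm \<Rightarrow> nat set" where
  "frees_seq \<Gamma> C = (\<Union>F\<in>set_mset \<Gamma>. frees F) \<union> frees C"

fun esubst :: "(nat \<Rightarrow> ty \<Rightarrow> trm) \<Rightarrow> trm \<Rightarrow> trm" where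
  "esubst \<theta> (TFree n T) = \<theta> n T"
| "esubst \<theta> (TApp s t) = TApp (esubst \<theta> s) (esubst \<theta> t)"
| "esubst \<theta> (TLam T t) = TLam T (esubst \<theta> t)"
| "esubst \<theta> t = t"

definition wt_subst :: "defn \<Rightarrow> (nat \<Rightarrow> ty \<Rightarrow> trm) \<Rightarrow> bool" where
  "wt_subst D \<theta> \<longleftrightarrow> (\<forall>n T. has_ty D [] (\<theta> n T) T)"

definition apps :: "trm \<Rightarrow> trm list \<Rightarrow> trm" where
  "apps h ts = foldl TApp h ts"

abbreviation fBot where "fBot \<equiv> TCon CBot"
abbreviation fTop where "fTop \<equiv> TCon CTop"
abbreviation fAnd where "fAnd A B \<equiv> TApp (TApp (TCon CAnd) A) B"
abbreviation fOr where "fOr A B \<equiv> TApp (TApp (TCon COr) A) B"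
abbreviation fImp where "fImp A B \<equiv> TApp (TApp (TCon CImp) A) B"
abbreviation fAll where "fAll T P \<equiv> TApp (TCon (CAll T)) P"
abbreviation fEx where "fEx T P \<equiv> TApp (TCon (CEx T)) P"
abbreviation fEq where "fEq T s t \<equiv> TApp (TApp (TCon (CEq T)) s) t"
abbreviation fPred where "fPred p \<equiv> TCon (CPred p)"

definition fresh_args :: "defn \<Rightarrow> string \<Rightarrow> nat set \<Rightarrow> trm list \<Rightarrow> bool" where
  "fresh_args D p V ys \<longleftrightarrow> (\<exists>ns. distinct ns \<and> set ns \<inter> V = {} \<and>
      length ns = length (arg_tys (psig D p)) \<and>
      ys = map2 TFree ns (arg_tys (psig D p)))"

definition wf_defn :: "defn \<Rightarrow> bool" where
  "wf_defn D \<longleftrightarrow> (\<forall>p\<in>preds D. pred_ty (psig D p) \<and>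
      has_ty D [] (body D p) (TArr (psig D p) (psig D p)))"

text \<open>der D s c Gamma C: the sequent Gamma |- C is derivable; the rule subst
  may be used iff s, the rule mc may be used iff c.  Formulae are
  identified up to beta-eta conversion (rule conv).\<close>

inductive der :: "defn \<Rightarrow> bool \<Rightarrow> bool \<Rightarrow> trm multiset \<Rightarrow> trm \<Rightarrow> bool"
  for D :: defn and s :: bool and c :: bool where
  conv: "der D s c \<Gamma>' C' \<Longrightarrow> rel_mset beq \<Gamma>' \<Gamma> \<Longrightarrow> beq C' C \<Longrightarrow> wf_seq D \<Gamma> C
         \<Longrightarrow> der D s c \<Gamma> C"
| init: "wf_seq D {#C#} C \<Longrightarrow> der D s c {#C#} C"
| cL: "der D s c (add_mset B (add_mset B \<Gamma>)) C \<Longrightarrow> wf_seq D (add_mset B \<Gamma>) C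
       \<Longrightarrow> der D s c (add_mset B \<Gamma>) C"
| wL: "der D s c \<Gamma> C \<Longrightarrow> wf_seq D (add_mset B \<Gamma>) C \<Longrightarrow> der D s c (add_mset B \<Gamma>) C"
| mc: "c \<Longrightarrow> ps \<noteq> [] \<Longrightarrow> (\<forall>x\<in>set ps. der D s c (fst x) (snd x))
       \<Longrightarrow> der D s c (mset (map snd ps) + \<Gamma>) C
       \<Longrightarrow> wf_seq D (sum_list (map fst ps) + \<Gamma>) C
       \<Longrightarrow> der D s c (sum_list (map fst ps) + \<Gamma>) C"
| botL: "wf_seq D (add_mset fBot \<Gamma>) C \<Longrightarrow> der D s c (add_mset fBot \<Gamma>) C"
| topR: "wf_seq D \<Gamma> fTop \<Longrightarrow> der D s c \<Gamma> fTop"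
| andL1: "der D s c (add_mset A \<Gamma>) C \<Longrightarrow> wf_seq D (add_mset (fAnd A B) \<Gamma>) C
          \<Longrightarrow> der D s c (add_mset (fAnd A B) \<Gamma>) C"
| andL2: "der D s c (add_mset B \<Gamma>) C \<Longrightarrow> wf_seq D (add_mset (fAnd A B) \<Gamma>) C
          \<Longrightarrow> der D s c (add_mset (fAnd A B) \<Gamma>) C"
| andR: "der D s c \<Gamma> A \<Longrightarrow> der D s c \<Gamma> B \<Longrightarrow> wf_seq D \<Gamma> (fAnd A B)
         \<Longrightarrow> der D s c \<Gamma> (fAnd A B)"
| orL: "der D s c (add_mset A \<Gamma>) C \<Longrightarrow> der D s c (add_mset B \<Gamma>) C
        \<Longrightarrow> wf_seq D (add_mset (fOr A B) \<Gamma>) C \<Longrightarrow> der D s c (add_mset (fOr A B) \<Gamma>) C"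
| orR1: "der D s c \<Gamma> A \<Longrightarrow> wf_seq D \<Gamma> (fOr A B) \<Longrightarrow> der D s c \<Gamma> (fOr A B)"
| orR2: "der D s c \<Gamma> B \<Longrightarrow> wf_seq D \<Gamma> (fOr A B) \<Longrightarrow> der D s c \<Gamma> (fOr A B)"
| impL: "der D s c \<Gamma> A \<Longrightarrow> der D s c (add_mset B \<Gamma>) C
         \<Longrightarrow> wf_seq D (add_mset (fImp A B) \<Gamma>) C \<Longrightarrow> der D s c (add_mset (fImp A B) \<Gamma>) C"
| impR: "der D s c (add_mset A \<Gamma>) B \<Longrightarrow> wf_seq D \<Gamma> (fImp A B) \<Longrightarrow> der D s c \<Gamma> (fImp A B)"
| allL: "has_ty D [] t T \<Longrightarrow> der D s c (add_mset (TApp P t) \<Gamma>) C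
         \<Longrightarrow> wf_seq D (add_mset (fAll T P) \<Gamma>) C \<Longrightarrow> der D s c (add_mset (fAll T P) \<Gamma>) C"
| allR: "y \<notin> frees_seq \<Gamma> (fAll T P) \<Longrightarrow> der D s c \<Gamma> (TApp P (TFree y T))
         \<Longrightarrow> wf_seq D \<Gamma> (fAll T P) \<Longrightarrow> der D s c \<Gamma> (fAll T P)"
| exL: "y \<notin> frees_seq (add_mset (fEx T P) \<Gamma>) C \<Longrightarrow> der D s c (add_mset (TApp P (TFree y T)) \<Gamma>) C
        \<Longrightarrow> wf_seq D (add_mset (fEx T P) \<Gamma>) C \<Longrightarrow> der D s c (add_mset (fEx T P) \<Gamma>) C"
| exR: "has_ty D [] t T \<Longrightarrow> der D s c \<Gamma> (TApp P t) \<Longrightarrow> wf_seq D \<Gamma> (fEx T P)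
        \<Longrightarrow> der D s c \<Gamma> (fEx T P)"
| eqR: "wf_seq D \<Gamma> (fEq T t t) \<Longrightarrow> der D s c \<Gamma> (fEq T t t)"
| eqL: "(\<forall>\<rho>. wt_subst D \<rho> \<and> beq (esubst \<rho> u) (esubst \<rho> v) \<longrightarrow>
           der D s c (image_mset (esubst \<rho>) \<Gamma>) (esubst \<rho> C))
        \<Longrightarrow> wf_seq D (add_mset (fEq T u v) \<Gamma>) C \<Longrightarrow> der D s c (add_mset (fEq T u v) \<Gamma>) C"
| IL: "kind D p = Mu \<Longrightarrow> has_ty D [] S (psig D p) \<Longrightarrow> fresh_args D p (frees S) ys
       \<Longrightarrow> der D s c {# apps (TApp (body D p) S) ys #} (apps S ys)
       \<Longrightarrow> der D s c (add_mset (apps S ts) \<Gamma>) C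
       \<Longrightarrow> wf_seq D (add_mset (apps (fPred p) ts) \<Gamma>) C
       \<Longrightarrow> der D s c (add_mset (apps (fPred p) ts) \<Gamma>) C"
| IR: "kind D p = Mu \<Longrightarrow> der D s c \<Gamma> (apps (TApp (body D p) (fPred p)) ts)
       \<Longrightarrow> wf_seq D \<Gamma> (apps (fPred p) ts) \<Longrightarrow> der D s c \<Gamma> (apps (fPred p) ts)"
| IRp: "kind D p = Mu \<Longrightarrow> der D s c \<Gamma> (apps (TApp (body D p) (TPar X p)) ts)
       \<Longrightarrow> wf_seq D \<Gamma> (apps (TPar X p) ts) \<Longrightarrow> der D s c \<Gamma> (apps (TPar X p) ts)"
| CIL: "kind D p = Nu \<Longrightarrow> der D s c (add_mset (apps (TApp (body D p) (fPred p)) ts) \<Gamma>) C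
       \<Longrightarrow> wf_seq D (add_mset (apps (fPred p) ts) \<Gamma>) C
       \<Longrightarrow> der D s c (add_mset (apps (fPred p) ts) \<Gamma>) C"
| CILp: "kind D p = Nu \<Longrightarrow> der D s c (add_mset (apps (TApp (body D p) (TPar X p)) ts) \<Gamma>) C
       \<Longrightarrow> wf_seq D (add_mset (apps (TPar X p) ts) \<Gamma>) C
       \<Longrightarrow> der D s c (add_mset (apps (TPar X p) ts) \<Gamma>) C"
| CIR: "kind D p = Nu \<Longrightarrow> has_ty D [] S (psig D p) \<Longrightarrow> fresh_args D p (frees S) ys
       \<Longrightarrow> der D s c \<Gamma> (apps S ts)
       \<Longrightarrow> der D s c {# apps S ys #} (apps (TApp (body D p) S) ys)
       \<Longrightarrow> wf_seq D \<Gamma> (apps (fPred p) ts) \<Longrightarrow> der D s c \<Gamma> (apps (fPred p) ts)"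
| subst: "s \<Longrightarrow> (\<forall>\<theta>. wt_subst D \<theta> \<longrightarrow> der D s c (image_mset (esubst \<theta>) \<Gamma>) (esubst \<theta> C))
          \<Longrightarrow> wf_seq D \<Gamma> C \<Longrightarrow> der D s c \<Gamma> C"

end

theory Submission
  imports Defs
begin

lemma esubst_id: "esubst (\<lambda>n T. TFree n T) t = t"
  by (induction t) auto

lemma esubst_id_mset: "image_mset (esubst TFree) M = M"
proof -
  have "esubst TFree = id" using esubst_id[of] by (auto simp: fun_eq_iff)
  then show ?thesis by simp
qed

lemma wt_id: "wt_subst D (\<lambda>n T. TFree n T)"
  by (simp add: wt_subst_def ty_free)

lemma elim_subst: "der D s c \<Gamma> C \<Longrightarrow> der D False c \<Gamma> C"
proof (induction rule: der.induct)
  case (mc ps \<Gamma> C)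
  then show ?case by (intro der.mc) auto
next
  case (eqL T u v \<Gamma> C)
  then show ?case by (intro der.eqL) auto
next
  case (subst \<Gamma> C)
  then have "der D False c (image_mset (esubst (\<lambda>n T. TFree n T)) \<Gamma>) (esubst (\<lambda>n T. TFree n T) C)"
    using wt_id by blast
  then show ?case using esubst_id[of C] esubst_id_mset[of \<Gamma>] by simp
qed (auto intro: der.intros)

theorem mainTheorem4:
  fixes D :: defn and \<Gamma> :: "trm multiset" and C :: trm
  assumes "wf_defn D"
  shows "(der D True True \<Gamma> C \<longrightarrow> der D False True \<Gamma> C)
       \<and> (der D True False \<Gamma> C \<longrightarrow> der D False False \<Gamma> C)"
  using elim_subst by blast

end
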